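(* Let $p\ge1$, $U\ge1$, positive integers $n_1,\dots,n_U$ with $n=\sum_un_u$, symmetric matrices $G^{A,u}\in\mathbb{R}^{p\times p}$ ($u=1,\dots,U$), symmetric $G^{C,u}\in\mathbb{R}^{p\times p}$ for each $u$ with $n_u\ge2$, and $G^{D,uv}\in\mathbb{R}^{p\times p}$ for $u\ne v$ with $G^{D,vu}=(G^{D,uv})^T$. Let $G^s\in\mathbb{R}^{np\times np}$ be the block matrix with diagonal blocks $G^s_{\mathcal{V}_u}=G^{A,u}$ if $n_u=1$ and $G^s_{\mathcal{V}_u}=\mathbf{1}_{n_u}\mathbf{1}_{n_u}^T\otimes G^{C,u}+I_{n_u}\otimes(G^{A,u}-G^{C,u})$ if $n_u\ge2$, and off-diagonal blocks $G^s_{\mathcal{V}_u\mathcal{V}_v}=\mathbf{1}_{n_u}\mathbf{1}_{n_v}^T\otimes G^{D,uv}$ ($u\ne v$). Then $G^s\succeq0$ if and only if $G^{A,u}\succeq0$ for all $u$ with $n_u=1$, $G^{A,u}-G^{C,u}\succeq0$ for all $u$ with $n_u\ge2$, and $H\succeq0$, where $H\in\mathbb{R}^{Up\times Up}$ is the symmetric block matrix with blocks $H^{uu}=n_uG^{A,u}+n_u(n_u-1)G^{C,u}$ (with $G^{C,u}:=0$ when $n_u=1$) and $H^{uv}=n_un_vG^{D,uv}$ for $u\ne v$. *)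

theory Defs
  imports Complex_Main
begin

text \<open>A real matrix whose rows and columns are indexed by a finite index set I
  (the ordering of indices is irrelevant for positive semidefiniteness).\<close>
definition psd_on :: "'i set \<Rightarrow> ('i \<Rightarrow> 'i \<Rightarrow> real) \<Rightarrow> bool" where
  "psd_on I M \<longleftrightarrow> (\<forall>a\<in>I. \<forall>b\<in>I. M a b = M b a) \<and>
     (\<forall>x :: 'i \<Rightarrow> real. 0 \<le> (\<Sum>a\<in>I. \<Sum>b\<in>I. x a * M a b * x b))"

text \<open>Index sets: [p] for p x p blocks; vertex (u,k) with k < n_u, coordinate i < p
  for the np x np matrix G^s; (u,i) for the Up x Up matrix H.\<close>
definition idx_p :: "nat \<Rightarrow> nat set" where
  "idx_p p = {..<p}"

definition idx_Gs :: "nat \<Rightarrow> (nat \<Rightarrow> nat) \<Rightarrow> nat \<Rightarrow> (nat \<times> nat \<times> nat) set" where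
  "idx_Gs U n p = {(u, k, i). u < U \<and> k < n u \<and> i < p}"

definition idx_H :: "nat \<Rightarrow> nat \<Rightarrow> (nat \<times> nat) set" where
  "idx_H U p = {(u, i). u < U \<and> i < p}"

text \<open>The block matrix G^s, entry ((u,k,i),(v,l,j)).  Diagonal block u:
  G^{A,u} if n_u = 1, else 1 1^T \<otimes> G^{C,u} + I \<otimes> (G^{A,u} - G^{C,u});
  off-diagonal blocks 1 1^T \<otimes> G^{D,uv}.\<close>
definition Gs :: "(nat \<Rightarrow> nat) \<Rightarrow> (nat \<Rightarrow> nat \<Rightarrow> nat \<Rightarrow> real) \<Rightarrow> (nat \<Rightarrow> nat \<Rightarrow> nat \<Rightarrow> real)
    \<Rightarrow> (nat \<Rightarrow> nat \<Rightarrow> nat \<Rightarrow> nat \<Rightarrow> real) \<Rightarrow> nat \<times> nat \<times> nat \<Rightarrow> nat \<times> nat \<times> nat \<Rightarrow> real" where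
  "Gs n GA GC GD = (\<lambda>(u, k, i) (v, l, j).
     if u = v then
       (if n u = 1 then GA u i j
        else GC u i j + (if k = l then GA u i j - GC u i j else 0))
     else GD u v i j)"

definition Hmat :: "(nat \<Rightarrow> nat) \<Rightarrow> (nat \<Rightarrow> nat \<Rightarrow> nat \<Rightarrow> real) \<Rightarrow> (nat \<Rightarrow> nat \<Rightarrow> nat \<Rightarrow> real)
    \<Rightarrow> (nat \<Rightarrow> nat \<Rightarrow> nat \<Rightarrow> nat \<Rightarrow> real) \<Rightarrow> nat \<times> nat \<Rightarrow> nat \<times> nat \<Rightarrow> real" where
  "Hmat n GA GC GD = (\<lambda>(u, i) (v, j).
     if u = v then
       real (n u) * GA u i j + real (n u) * (real (n u) - 1) * (if n u = 1 then 0 else GC u i j)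
     else real (n u) * real (n v) * GD u v i j)"

end

theory Submission
  imports Defs
begin

lemma sum_idx_Gs: "(\<Sum>a\<in>idx_Gs U n p. f a) = (\<Sum>u<U. \<Sum>k<n u. \<Sum>i<p. f (u,k,i))"
proof -
  have e: "idx_Gs U n p = Sigma {..<U} (\<lambda>u. Sigma {..<n u} (\<lambda>k. {..<p}))"
    by (auto simp: idx_Gs_def)
  show ?thesis unfolding e by (simp add: sum.Sigma split_def)
qed

lemma sum_idx_H: "(\<Sum>a\<in>idx_H U p. f a) = (\<Sum>u<U. \<Sum>i<p. f (u,i))"
proof -
  have e: "idx_H U p = Sigma {..<U} (\<lambda>u. {..<p})"
    by (auto simp: idx_H_def)
  show ?thesis unfolding e by (simp add: sum.Sigma split_def)
qed

lemma swap4: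
  "(\<Sum>a\<in>A. \<Sum>b\<in>B. \<Sum>c\<in>C b. \<Sum>d\<in>D b c. h a b c d) = (\<Sum>b\<in>B. \<Sum>c\<in>C b. \<Sum>d\<in>D b c. \<Sum>a\<in>A. h a b c d)"
  by (simp only: sum.swap[of _ A])

lemma sum_if0: "(\<Sum>j\<in>A. if c then f j else (0::real)) = (if c then sum f A else 0)"
  by simp

definition qp :: "nat \<Rightarrow> (nat \<Rightarrow> nat \<Rightarrow> real) \<Rightarrow> (nat \<Rightarrow> real) \<Rightarrow> real" where
  "qp p M w = (\<Sum>i<p. \<Sum>j<p. w i * M i j * w j)"

lemma qp_decomp:
  fixes X :: "nat \<Rightarrow> nat \<Rightarrow> real"
  assumes "N > 0"
  defines "S \<equiv> \<lambda>i. \<Sum>k<N. X k i"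
  shows "(\<Sum>k<N. qp p M (X k)) = qp p M S / N + (\<Sum>k<N. qp p M (\<lambda>i. X k i - S i / N))"
proof -
  have ex: "qp p M (\<lambda>i. a i - b i) = qp p M a - (\<Sum>i<p. \<Sum>j<p. a i * M i j * b j)
     - (\<Sum>i<p. \<Sum>j<p. b i * M i j * a j) + qp p M b" for a b
    unfolding qp_def by (simp add: algebra_simps sum.distrib sum_subtractf)
  have sw: "(\<Sum>k<N. \<Sum>i<p. \<Sum>j<p. g k i j) = (\<Sum>i<p. \<Sum>j<p. \<Sum>k<N. g k i j)" for g :: "nat \<Rightarrow> nat \<Rightarrow> nat \<Rightarrow> real"
    by (simp only: sum.swap[of _ "{..<N}"])
  have b1: "(\<Sum>k<N. \<Sum>i<p. \<Sum>j<p. X k i * M i j * (S j / N)) = qp p M S / N"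
  proof -
    have "(\<Sum>k<N. \<Sum>i<p. \<Sum>j<p. X k i * M i j * (S j / N)) = (\<Sum>i<p. \<Sum>j<p. \<Sum>k<N. X k i * M i j * (S j / N))"
      by (rule sw)
    also have "\<dots> = (\<Sum>i<p. \<Sum>j<p. S i * (M i j * (S j / N)))"
      by (simp add: S_def sum_distrib_right mult.assoc sum_divide_distrib)
    finally show ?thesis unfolding qp_def by (simp add: sum_divide_distrib mult.assoc)
  qed
  have b2: "(\<Sum>k<N. \<Sum>i<p. \<Sum>j<p. (S i / N) * M i j * X k j) = qp p M S / N"
  proof -
    have "(\<Sum>k<N. \<Sum>i<p. \<Sum>j<p. (S i / N) * M i j * X k j) = (\<Sum>i<p. \<Sum>j<p. \<Sum>k<N. (S i / N) * M i j * X k j)"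
      by (rule sw)
    also have "\<dots> = (\<Sum>i<p. \<Sum>j<p. ((S i / N) * M i j) * S j)"
      by (simp add: S_def sum_distrib_left)
    finally show ?thesis unfolding qp_def by (simp add: sum_divide_distrib)
  qed
  have b3: "qp p M (\<lambda>i. S i / N) = qp p M S / N / N"
    unfolding qp_def by (simp add: sum_divide_distrib)
  have "(\<Sum>k<N. qp p M (\<lambda>i. X k i - S i / N)) = (\<Sum>k<N. qp p M (X k) - (\<Sum>i<p. \<Sum>j<p. X k i * M i j * (S j / N))
     - (\<Sum>i<p. \<Sum>j<p. (S i / N) * M i j * X k j) + qp p M (\<lambda>i. S i / N))"
    by (rule sum.cong[OF refl], rule ex)
  also have "\<dots> = (\<Sum>k<N. qp p M (X k)) - qp p M S / N - qp p M S / N + N * (qp p M S / N / N)"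
    by (simp only: sum.distrib sum_subtractf b1 b2 b3 sum_constant card_lessThan)
  finally have "(\<Sum>k<N. qp p M (\<lambda>i. X k i - S i / N)) = (\<Sum>k<N. qp p M (X k)) - qp p M S / N" 
    using assms(1) by simp
  then show ?thesis by simp
qed


definition Kf :: "(nat \<Rightarrow> nat) \<Rightarrow> (nat \<Rightarrow> nat \<Rightarrow> nat \<Rightarrow> real) \<Rightarrow> (nat \<Rightarrow> nat \<Rightarrow> nat \<Rightarrow> real)
    \<Rightarrow> (nat \<Rightarrow> nat \<Rightarrow> nat \<Rightarrow> nat \<Rightarrow> real) \<Rightarrow> nat \<Rightarrow> nat \<Rightarrow> nat \<Rightarrow> nat \<Rightarrow> real" where
  "Kf n GA GC GD u v i j = (if u = v then (if n u = 1 then GA u i j else GC u i j) else GD u v i j)"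

lemma T2_inner:
  fixes x :: "nat \<times> nat \<times> nat \<Rightarrow> real" and AC :: "nat \<Rightarrow> nat \<Rightarrow> nat \<Rightarrow> real"
  assumes "u < U" "k < n u"
  shows "(\<Sum>v<U. \<Sum>l<n v. \<Sum>j<p. x (u,k,i) * (if u = v \<and> k = l \<and> n u \<noteq> 1 then AC u i j else 0) * x (v,l,j))
    = (if n u = 1 then 0 else (\<Sum>j<p. x (u,k,i) * AC u i j * x (u,k,j)))"
proof -
  have "(\<Sum>v<U. \<Sum>l<n v. \<Sum>j<p. x (u,k,i) * (if u = v \<and> k = l \<and> n u \<noteq> 1 then AC u i j else 0) * x (v,l,j))
     = (\<Sum>v<U. if v = u then (\<Sum>l<n v. if l = k then (if n u = 1 then 0 else (\<Sum>j<p. x (u,k,i) * AC u i j * x (v,l,j))) else 0) else 0)"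
  proof -
    have "(\<Sum>j<p. x (u,k,i) * (if u = v \<and> k = l \<and> n u \<noteq> 1 then AC u i j else 0) * x (v,l,j))
      = (if l = k then (if n u = 1 then 0 else (\<Sum>j<p. x (u,k,i) * AC u i j * x (v,l,j))) else 0)" if "v = u" for v l
      using that by auto
    moreover have "(\<Sum>j<p. x (u,k,i) * (if u = v \<and> k = l \<and> n u \<noteq> 1 then AC u i j else 0) * x (v,l,j)) = 0"
      if "v \<noteq> u" for v l
      using that by auto
    ultimately show ?thesis by (intro sum.cong refl) auto
  qed
  also have "\<dots> = (if n u = 1 then 0 else (\<Sum>j<p. x (u,k,i) * AC u i j * x (u,k,j)))"
    using assms by simp
  finally show ?thesis .
qed


lemma main_id:
  fixes x :: "nat \<times> nat \<times> nat \<Rightarrow> real"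
    and GA GC :: "nat \<Rightarrow> nat \<Rightarrow> nat \<Rightarrow> real"
    and GD :: "nat \<Rightarrow> nat \<Rightarrow> nat \<Rightarrow> nat \<Rightarrow> real"
  assumes npos: "\<And>u. u < U \<Longrightarrow> n u \<ge> 1"
  defines "S \<equiv> \<lambda>u i. \<Sum>k<n u. x (u,k,i)"
  shows "(\<Sum>a\<in>idx_Gs U n p. \<Sum>b\<in>idx_Gs U n p. x a * Gs n GA GC GD a b * x b) =
    (\<Sum>a\<in>idx_H U p. \<Sum>b\<in>idx_H U p. (case a of (u,i) \<Rightarrow> S u i / n u) * Hmat n GA GC GD a b * (case b of (u,i) \<Rightarrow> S u i / n u))
    + (\<Sum>u<U. if n u = 1 then 0 else \<Sum>k<n u. qp p (\<lambda>i j. GA u i j - GC u i j) (\<lambda>i. x (u,k,i) - S u i / n u))"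
proof -
  define AC where "AC = (\<lambda>u i j. GA u i j - GC u i j)"
  define K where "K = Kf n GA GC GD"
  have split: "Gs n GA GC GD (u,k,i) (v,l,j) = K u v i j + (if u = v \<and> k = l \<and> n u \<noteq> 1 then AC u i j else 0)" for u k i v l j
    by (simp add: Gs_def K_def Kf_def AC_def)
  have s0: "(\<Sum>a\<in>idx_Gs U n p. \<Sum>b\<in>idx_Gs U n p. x a * Gs n GA GC GD a b * x b) =
     (\<Sum>u<U. \<Sum>k<n u. \<Sum>i<p. \<Sum>v<U. \<Sum>l<n v. \<Sum>j<p. x (u,k,i) * Gs n GA GC GD (u,k,i) (v,l,j) * x (v,l,j))"
    by (simp only: sum_idx_Gs)
  have s1: "(\<Sum>u<U. \<Sum>k<n u. \<Sum>i<p. \<Sum>v<U. \<Sum>l<n v. \<Sum>j<p. x (u,k,i) * Gs n GA GC GD (u,k,i) (v,l,j) * x (v,l,j)) = (\<Sum>u<U. \<Sum>k<n u. \<Sum>i<p. \<Sum>v<U. \<Sum>l<n v. \<Sum>j<p. x (u,k,i) * K u v i j * x (v,l,j))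
     + (\<Sum>u<U. \<Sum>k<n u. \<Sum>i<p. \<Sum>v<U. \<Sum>l<n v. \<Sum>j<p. x (u,k,i) * (if u = v \<and> k = l \<and> n u \<noteq> 1 then AC u i j else 0) * x (v,l,j))"
    by (simp only: split distrib_left distrib_right sum.distrib)
  have s2: "(\<Sum>u<U. \<Sum>k<n u. \<Sum>i<p. \<Sum>v<U. \<Sum>l<n v. \<Sum>j<p. x (u,k,i) * K u v i j * x (v,l,j))
     = (\<Sum>u<U. \<Sum>i<p. \<Sum>v<U. \<Sum>j<p. S u i * K u v i j * S v j)"
  proof (rule sum.cong[OF refl])
    fix u assume "u \<in> {..<U}"
    have "(\<Sum>k<n u. \<Sum>i<p. \<Sum>v<U. \<Sum>l<n v. \<Sum>j<p. x (u,k,i) * K u v i j * x (v,l,j))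
       = (\<Sum>k<n u. \<Sum>i<p. \<Sum>v<U. \<Sum>j<p. x (u,k,i) * K u v i j * S v j)"
    proof -
      have "(\<Sum>l<n v. \<Sum>j<p. x (u,k,i) * K u v i j * x (v,l,j)) = (\<Sum>j<p. x (u,k,i) * K u v i j * S v j)" for k i v
        unfolding S_def by (subst sum.swap) (simp add: sum_distrib_left)
      then show ?thesis by simp
    qed
    also have "\<dots> = (\<Sum>i<p. \<Sum>v<U. \<Sum>j<p. \<Sum>k<n u. x (u,k,i) * K u v i j * S v j)"
      by (rule swap4)
    also have "\<dots> = (\<Sum>i<p. \<Sum>v<U. \<Sum>j<p. S u i * K u v i j * S v j)"
      unfolding S_def by (simp add: sum_distrib_right)
    finally show "(\<Sum>k<n u. \<Sum>i<p. \<Sum>v<U. \<Sum>l<n v. \<Sum>j<p. x (u,k,i) * K u v i j * x (v,l,j))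
       = (\<Sum>i<p. \<Sum>v<U. \<Sum>j<p. S u i * K u v i j * S v j)" .
  qed
  have s3: "(\<Sum>u<U. \<Sum>k<n u. \<Sum>i<p. \<Sum>v<U. \<Sum>l<n v. \<Sum>j<p. x (u,k,i) * (if u = v \<and> k = l \<and> n u \<noteq> 1 then AC u i j else 0) * x (v,l,j))
     = (\<Sum>u<U. if n u = 1 then 0 else \<Sum>k<n u. qp p (AC u) (\<lambda>i. x (u,k,i)))"
  proof (rule sum.cong[OF refl])
    fix u assume u: "u \<in> {..<U}"
    have "(\<Sum>k<n u. \<Sum>i<p. \<Sum>v<U. \<Sum>l<n v. \<Sum>j<p. x (u,k,i) * (if u = v \<and> k = l \<and> n u \<noteq> 1 then AC u i j else 0) * x (v,l,j))
      = (\<Sum>k<n u. \<Sum>i<p. if n u = 1 then 0 else (\<Sum>j<p. x (u,k,i) * AC u i j * x (u,k,j)))"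
      using u by (intro sum.cong refl) (simp only: T2_inner lessThan_iff)
    then show "(\<Sum>k<n u. \<Sum>i<p. \<Sum>v<U. \<Sum>l<n v. \<Sum>j<p. x (u,k,i) * (if u = v \<and> k = l \<and> n u \<noteq> 1 then AC u i j else 0) * x (v,l,j))
      = (if n u = 1 then 0 else \<Sum>k<n u. qp p (AC u) (\<lambda>i. x (u,k,i)))"
      by (simp add: qp_def)
  qed
  have s4: "(\<Sum>u<U. if n u = 1 then 0 else \<Sum>k<n u. qp p (AC u) (\<lambda>i. x (u,k,i)))
     = (\<Sum>u<U. if n u = 1 then 0 else qp p (AC u) (S u) / n u) + 
       (\<Sum>u<U. if n u = 1 then 0 else \<Sum>k<n u. qp p (AC u) (\<lambda>i. x (u,k,i) - S u i / n u))"
  proof -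
    have "(if n u = 1 then 0 else \<Sum>k<n u. qp p (AC u) (\<lambda>i. x (u,k,i))) = 
       (if n u = 1 then 0 else qp p (AC u) (S u) / n u) + 
       (if n u = 1 then 0 else \<Sum>k<n u. qp p (AC u) (\<lambda>i. x (u,k,i) - S u i / n u))" if "u < U" for u
    proof -
      have "n u > 0" using npos[OF that] by simp
      from qp_decomp[OF this, of p "AC u" "\<lambda>k i. x (u,k,i)"]
      show ?thesis unfolding S_def by simp
    qed
    then show ?thesis by (simp add: sum.distrib[symmetric])
  qed
  have s5: "(\<Sum>u<U. \<Sum>i<p. \<Sum>v<U. \<Sum>j<p. S u i * K u v i j * S v j) + 
      (\<Sum>u<U. if n u = 1 then 0 else qp p (AC u) (S u) / n u) = 
     (\<Sum>a\<in>idx_H U p. \<Sum>b\<in>idx_H U p. (case a of (u,i) \<Rightarrow> S u i / n u) * Hmat n GA GC GD a b * (case b of (u,i) \<Rightarrow> S u i / n u))"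
  proof -
    have e1: "(if n u = 1 then 0 else qp p (AC u) (S u) / n u) = 
      (\<Sum>i<p. \<Sum>v<U. \<Sum>j<p. if v = u \<and> n u \<noteq> 1 then S u i * AC u i j * S v j / n u else 0)" if "u < U" for u
    proof -
      have "(\<Sum>i<p. \<Sum>v<U. \<Sum>j<p. if v = u \<and> n u \<noteq> 1 then S u i * AC u i j * S v j / n u else 0)
        = (\<Sum>i<p. \<Sum>v<U. if v = u then (\<Sum>j<p. if n u \<noteq> 1 then S u i * AC u i j * S u j / n u else 0) else 0)"
        by (intro sum.cong refl) auto
      also have "\<dots> = (\<Sum>i<p. \<Sum>j<p. if n u \<noteq> 1 then S u i * AC u i j * S u j / n u else 0)"
        using that by simp
      also have "\<dots> = (if n u = 1 then 0 else qp p (AC u) (S u) / n u)"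
        by (simp add: qp_def sum_divide_distrib)
      finally show ?thesis by simp
    qed
    have e2: "S u i * K u v i j * S v j + (if v = u \<and> n u \<noteq> 1 then S u i * AC u i j * S v j / n u else 0)
       = (S u i / n u) * Hmat n GA GC GD (u,i) (v,j) * (S v j / n v)" if "u < U" "v < U" for u v i j
    proof -
      have "n u > 0" "n v > 0" using npos that by (auto simp: Suc_le_eq)
      then show ?thesis
        by (cases "u = v") (auto simp: K_def Kf_def AC_def Hmat_def field_simps)
    qed
    have "(\<Sum>u<U. \<Sum>i<p. \<Sum>v<U. \<Sum>j<p. S u i * K u v i j * S v j) + 
      (\<Sum>u<U. if n u = 1 then 0 else qp p (AC u) (S u) / n u) = 
      (\<Sum>u<U. \<Sum>i<p. \<Sum>v<U. \<Sum>j<p. S u i * K u v i j * S v j + (if v = u \<and> n u \<noteq> 1 then S u i * AC u i j * S v j / n u else 0))"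
    proof -
      have "(\<Sum>u<U. if n u = 1 then 0 else qp p (AC u) (S u) / n u) = 
        (\<Sum>u<U. \<Sum>i<p. \<Sum>v<U. \<Sum>j<p. if v = u \<and> n u \<noteq> 1 then S u i * AC u i j * S v j / n u else 0)"
        by (rule sum.cong[OF refl]) (simp only: e1 lessThan_iff)
      then show ?thesis by (simp only: sum.distrib)
    qed
    also have "\<dots> = (\<Sum>u<U. \<Sum>i<p. \<Sum>v<U. \<Sum>j<p. (S u i / n u) * Hmat n GA GC GD (u,i) (v,j) * (S v j / n v))"
      by (intro sum.cong refl e2) auto
    finally show ?thesis by (simp add: sum_idx_H)
  qed
    show ?thesis unfolding s0 s1 s2 s3 s4 s5[symmetric] unfolding AC_def by (simp only: add.assoc)
qed


lemma qp_zero: "qp p M (\<lambda>i. 0) = 0" by (simp add: qp_def)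

lemma qf_H_single:
  fixes H :: "nat \<times> nat \<Rightarrow> nat \<times> nat \<Rightarrow> real"
  assumes "u < U"
  shows "(\<Sum>a\<in>idx_H U p. \<Sum>b\<in>idx_H U p. (case a of (v,i) \<Rightarrow> if v = u then w i else 0) * H a b * (case b of (v,i) \<Rightarrow> if v = u then w i else 0))
    = (\<Sum>i<p. \<Sum>j<p. w i * H (u,i) (u,j) * w j)"
proof -
  have "(\<Sum>a\<in>idx_H U p. \<Sum>b\<in>idx_H U p. (case a of (v,i) \<Rightarrow> if v = u then w i else 0) * H a b * (case b of (v,i) \<Rightarrow> if v = u then w i else 0))
    = (\<Sum>v<U. \<Sum>i<p. \<Sum>v'<U. \<Sum>j<p. (if v = u then w i else 0) * H (v,i) (v',j) * (if v' = u then w j else 0))"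
    by (simp add: sum_idx_H)
  also have "\<dots> = (\<Sum>v<U. if v = u then (\<Sum>i<p. \<Sum>v'<U. if v' = u then (\<Sum>j<p. w i * H (u,i) (u,j) * w j) else 0) else 0)"
  proof -
    have e: "(if v = u then w i else 0) * H (v,i) (v',j) * (if v' = u then w j else 0)
      = (if v = u then (if v' = u then w i * H (u,i) (u,j) * w j else 0) else 0)" for v v' i j
      by simp
    show ?thesis by (simp only: e sum_if0)
  qed
  also have "\<dots> = (\<Sum>i<p. \<Sum>j<p. w i * H (u,i) (u,j) * w j)"
    using assms by simp
  finally show ?thesis .
qed

theorem lemma5:
  fixes p U :: nat and n :: "nat \<Rightarrow> nat"
    and GA GC :: "nat \<Rightarrow> nat \<Rightarrow> nat \<Rightarrow> real"
    and GD :: "nat \<Rightarrow> nat \<Rightarrow> nat \<Rightarrow> nat \<Rightarrow> real"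
  assumes "p \<ge> 1" and "U \<ge> 1"
    and "\<And>u. u < U \<Longrightarrow> n u \<ge> 1"
    and "\<And>u i j. u < U \<Longrightarrow> i < p \<Longrightarrow> j < p \<Longrightarrow> GA u i j = GA u j i"
    and "\<And>u i j. u < U \<Longrightarrow> n u \<ge> 2 \<Longrightarrow> i < p \<Longrightarrow> j < p \<Longrightarrow> GC u i j = GC u j i"
    and "\<And>u v i j. u < U \<Longrightarrow> v < U \<Longrightarrow> u \<noteq> v \<Longrightarrow> i < p \<Longrightarrow> j < p \<Longrightarrow>
           GD v u i j = GD u v j i"
  shows "psd_on (idx_Gs U n p) (Gs n GA GC GD) \<longleftrightarrow>
    ((\<forall>u<U. n u = 1 \<longrightarrow> psd_on (idx_p p) (GA u)) \<and>
     (\<forall>u<U. n u \<ge> 2 \<longrightarrow> psd_on (idx_p p) (\<lambda>i j. GA u i j - GC u i j)) \<and>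
     psd_on (idx_H U p) (Hmat n GA GC GD))"
proof -
  note npos = assms(3)
  have n2: "n u \<ge> 2" if "u < U" "n u \<noteq> 1" for u using npos[OF that(1)] that(2) by linarith
  have symGs: "\<forall>a\<in>idx_Gs U n p. \<forall>b\<in>idx_Gs U n p. Gs n GA GC GD a b = Gs n GA GC GD b a"
  proof (intro ballI)
    fix a b assume a: "a \<in> idx_Gs U n p" and b: "b \<in> idx_Gs U n p"
    obtain u k i where au: "a = (u,k,i)" "u < U" "k < n u" "i < p" using a by (auto simp: idx_Gs_def)
    obtain v l j where bv: "b = (v,l,j)" "v < U" "l < n v" "j < p" using b by (auto simp: idx_Gs_def)
    show "Gs n GA GC GD a b = Gs n GA GC GD b a"
    proof (cases "u = v")
      case True
      then show ?thesis using au bv assms(4)[of u i j] assms(5)[of u i j] n2[of u]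
        by (auto simp: Gs_def)
    next
      case False
      then show ?thesis using au bv assms(6)[of u v j i] by (auto simp: Gs_def)
    qed
  qed
  have symH: "\<forall>a\<in>idx_H U p. \<forall>b\<in>idx_H U p. Hmat n GA GC GD a b = Hmat n GA GC GD b a"
  proof (intro ballI)
    fix a b assume a: "a \<in> idx_H U p" and b: "b \<in> idx_H U p"
    obtain u i where au: "a = (u,i)" "u < U" "i < p" using a by (auto simp: idx_H_def)
    obtain v j where bv: "b = (v,j)" "v < U" "j < p" using b by (auto simp: idx_H_def)
    show "Hmat n GA GC GD a b = Hmat n GA GC GD b a"
    proof (cases "u = v")
      case True
      then show ?thesis using au bv assms(4)[of u i j] assms(5)[of u i j] n2[of u]
        by (auto simp: Hmat_def)
    next
      case False
      then show ?thesis using au bv assms(6)[of u v j i] by (auto simp: Hmat_def)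
    qed
  qed
  have qp_idx: "qp p M w = (\<Sum>a\<in>idx_p p. \<Sum>b\<in>idx_p p. w a * M a b * w b)" for M w
    by (simp add: qp_def idx_p_def)
  note mid = main_id[of U n, OF npos]
  show ?thesis
  proof
    assume G: "psd_on (idx_Gs U n p) (Gs n GA GC GD)"
    have Q: "0 \<le> (\<Sum>a\<in>idx_H U p. \<Sum>b\<in>idx_H U p. (case a of (u,i) \<Rightarrow> (\<Sum>k<n u. x (u,k,i)) / n u) * Hmat n GA GC GD a b * (case b of (u,i) \<Rightarrow> (\<Sum>k<n u. x (u,k,i)) / n u))
    + (\<Sum>u<U. if n u = 1 then 0 else \<Sum>k<n u. qp p (\<lambda>i j. GA u i j - GC u i j) (\<lambda>i. x (u,k,i) - (\<Sum>k<n u. x (u,k,i)) / n u))" for x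
    proof -
      have "0 \<le> (\<Sum>a\<in>idx_Gs U n p. \<Sum>b\<in>idx_Gs U n p. x a * Gs n GA GC GD a b * x b)"
        using G unfolding psd_on_def by blast
      then show ?thesis by (simp only: mid)
    qed
    show "(\<forall>u<U. n u = 1 \<longrightarrow> psd_on (idx_p p) (GA u)) \<and>
     (\<forall>u<U. n u \<ge> 2 \<longrightarrow> psd_on (idx_p p) (\<lambda>i j. GA u i j - GC u i j)) \<and>
     psd_on (idx_H U p) (Hmat n GA GC GD)"
    proof (intro conjI allI impI)
      fix u assume u: "u < U" and n1: "n u = 1"
      show "psd_on (idx_p p) (GA u)"
        unfolding psd_on_def
      proof (intro conjI allI ballI)
        fix i j assume "i \<in> idx_p p" "j \<in> idx_p p"
        then show "GA u i j = GA u j i" using assms(4)[OF u] by (auto simp: idx_p_def)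
      next
        fix w :: "nat \<Rightarrow> real"
        define x where "x = (\<lambda>(v::nat,k::nat,i). if v = u then w i else 0)"
        have Z: "(case a of (v,i) \<Rightarrow> (\<Sum>k<n v. x (v,k,i)) / n v) = (case a of (v,i) \<Rightarrow> if v = u then w i else 0)" for a
          using n1 by (cases a) (auto simp: x_def)
        have R0: "(\<Sum>v<U. if n v = 1 then 0 else \<Sum>k<n v. qp p (\<lambda>i j. GA v i j - GC v i j) (\<lambda>i. x (v,k,i) - (\<Sum>k<n v. x (v,k,i)) / n v)) = 0"
          using n1 by (intro sum.neutral) (auto simp: x_def qp_zero)
        have "0 \<le> (\<Sum>i<p. \<Sum>j<p. w i * Hmat n GA GC GD (u,i) (u,j) * w j)"
          using Q[of x] unfolding Z R0 qf_H_single[OF u] by simp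
        then show "0 \<le> (\<Sum>a\<in>idx_p p. \<Sum>b\<in>idx_p p. w a * GA u a b * w b)"
          using n1 by (simp add: Hmat_def idx_p_def)
      qed
    next
      fix u assume u: "u < U" and n2u: "n u \<ge> 2"
      show "psd_on (idx_p p) (\<lambda>i j. GA u i j - GC u i j)"
        unfolding psd_on_def
      proof (intro conjI allI ballI)
        fix i j assume "i \<in> idx_p p" "j \<in> idx_p p"
        then show "GA u i j - GC u i j = GA u j i - GC u j i" using assms(4,5)[OF u] n2u by (auto simp: idx_p_def)
      next
        fix w :: "nat \<Rightarrow> real"
        define x where "x = (\<lambda>(v::nat,k::nat,i). if v = u then (if k = 0 then w i else if k = 1 then - w i else 0) else 0)"
        have S0: "(\<Sum>k<n v. x (v,k,i)) = 0" for v i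
        proof (cases "v = u")
          case True
          have "(\<Sum>k<n v. x (v,k,i)) = (\<Sum>k\<in>{0,1}. x (v,k,i))"
            using True n2u by (intro sum.mono_neutral_right) (auto simp: x_def)
          then show ?thesis using True by (simp add: x_def)
        qed (simp add: x_def)
        have Z: "(case a of (v,i) \<Rightarrow> (\<Sum>k<n v. x (v,k,i)) / n v) = 0" for a
          by (cases a) (simp add: S0)
        have R1: "(\<Sum>v<U. if n v = 1 then 0 else \<Sum>k<n v. qp p (\<lambda>i j. GA v i j - GC v i j) (\<lambda>i. x (v,k,i) - (\<Sum>k<n v. x (v,k,i)) / n v))
           = (\<Sum>v<U. if v = u then (\<Sum>k<n u. qp p (\<lambda>i j. GA u i j - GC u i j) (\<lambda>i. x (u,k,i))) else 0)"
          using n2u by (intro sum.cong refl) (simp only: S0, simp add: x_def qp_zero)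
        also have "\<dots> = (\<Sum>k<n u. qp p (\<lambda>i j. GA u i j - GC u i j) (\<lambda>i. x (u,k,i)))"
          using u by simp
        also have "\<dots> = (\<Sum>k\<in>{0,1}. qp p (\<lambda>i j. GA u i j - GC u i j) (\<lambda>i. x (u,k,i)))"
          using n2u by (intro sum.mono_neutral_right) (auto simp: x_def qp_zero)
        also have "\<dots> = 2 * qp p (\<lambda>i j. GA u i j - GC u i j) w"
          by (simp add: x_def qp_def)
        finally have "0 \<le> 2 * qp p (\<lambda>i j. GA u i j - GC u i j) w"
          using Q[of x] unfolding Z by simp
        then show "0 \<le> (\<Sum>a\<in>idx_p p. \<Sum>b\<in>idx_p p. w a * (GA u a b - GC u a b) * w b)"
          by (simp add: qp_idx)
      qed
    next
      show "psd_on (idx_H U p) (Hmat n GA GC GD)"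
        unfolding psd_on_def
      proof (intro conjI symH allI)
        fix z :: "nat \<times> nat \<Rightarrow> real"
        define x where "x = (\<lambda>(v::nat,k::nat,i). z (v,i))"
        have S: "(\<Sum>k<n v. x (v,k,i)) / n v = z (v,i)" if "v < U" for v i
          using npos[OF that] by (simp add: x_def)
        have HZ: "(\<Sum>a\<in>idx_H U p. \<Sum>b\<in>idx_H U p. (case a of (u,i) \<Rightarrow> (\<Sum>k<n u. x (u,k,i)) / n u) * Hmat n GA GC GD a b * (case b of (u,i) \<Rightarrow> (\<Sum>k<n u. x (u,k,i)) / n u))
           = (\<Sum>a\<in>idx_H U p. \<Sum>b\<in>idx_H U p. z a * Hmat n GA GC GD a b * z b)"
          by (intro sum.cong refl) (auto simp: idx_H_def S)
        have R0: "(\<Sum>v<U. if n v = 1 then 0 else \<Sum>k<n v. qp p (\<lambda>i j. GA v i j - GC v i j) (\<lambda>i. x (v,k,i) - (\<Sum>k<n v. x (v,k,i)) / n v)) = 0"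
        proof (intro sum.neutral ballI)
          fix v assume v: "v \<in> {..<U}"
          have "(\<lambda>i. x (v,k,i) - (\<Sum>k<n v. x (v,k,i)) / n v) = (\<lambda>i. 0)" for k
            using S[of v] v by (auto simp: x_def)
          then show "(if n v = 1 then 0 else \<Sum>k<n v. qp p (\<lambda>i j. GA v i j - GC v i j) (\<lambda>i. x (v,k,i) - (\<Sum>k<n v. x (v,k,i)) / n v)) = 0"
            by (simp add: qp_zero)
        qed
        show "0 \<le> (\<Sum>a\<in>idx_H U p. \<Sum>b\<in>idx_H U p. z a * Hmat n GA GC GD a b * z b)"
          using Q[of x] unfolding HZ R0 by simp
      qed
    qed
  next
    assume R: "(\<forall>u<U. n u = 1 \<longrightarrow> psd_on (idx_p p) (GA u)) \<and>
     (\<forall>u<U. n u \<ge> 2 \<longrightarrow> psd_on (idx_p p) (\<lambda>i j. GA u i j - GC u i j)) \<and>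
     psd_on (idx_H U p) (Hmat n GA GC GD)"
    show "psd_on (idx_Gs U n p) (Gs n GA GC GD)"
      unfolding psd_on_def
    proof (intro conjI symGs allI)
      fix x :: "nat \<times> nat \<times> nat \<Rightarrow> real"
      have h1: "0 \<le> (\<Sum>a\<in>idx_H U p. \<Sum>b\<in>idx_H U p. z a * Hmat n GA GC GD a b * z b)" for z
        using R unfolding psd_on_def by blast
      have h2: "0 \<le> (\<Sum>u<U. if n u = 1 then 0 else \<Sum>k<n u. qp p (\<lambda>i j. GA u i j - GC u i j) (w u k))" for w
      proof (intro sum_nonneg)
        fix u assume u: "u \<in> {..<U}"
        show "0 \<le> (if n u = 1 then 0 else \<Sum>k<n u. qp p (\<lambda>i j. GA u i j - GC u i j) (w u k))"
        proof (cases "n u = 1")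
          case False
          then have "psd_on (idx_p p) (\<lambda>i j. GA u i j - GC u i j)" using R n2 u by auto
          then have "0 \<le> qp p (\<lambda>i j. GA u i j - GC u i j) (w u k)" for k
            unfolding psd_on_def qp_idx by blast
          then show ?thesis using False by (simp add: sum_nonneg)
        qed simp
      qed
      show "0 \<le> (\<Sum>a\<in>idx_Gs U n p. \<Sum>b\<in>idx_Gs U n p. x a * Gs n GA GC GD a b * x b)"
        by (subst mid) (simp, rule add_nonneg_nonneg[OF h1 h2])
    qed
  qed
qed

end
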